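(* Each of the following representations $\zeta_i:\mathrm{TVB}_2\to\mathrm{GL}_3(\mathbb{C})$, $1\le i\le 8$ (for every admissible choice of parameters), is unfaithful, i.e. not injective: \begin{itemize} \item[(1)] $\zeta_1(\sigma_1)=\begin{pmatrix} d & b\\ b/x^2 & d\end{pmatrix}\oplus 1$, $\zeta_1(\rho_1)=\begin{pmatrix} 0 & x\\ 1/x & 0\end{pmatrix}\oplus 1$, $\zeta_1(\gamma_1)=\mathrm{diag}(-1,1,1)$, $\zeta_1(\gamma_2)=\mathrm{diag}(1,-1,1)$, where $b,d,x\in\mathbb{C}$, $b^2-d^2x^2\neq 0$, $x\neq 0$. \item[(2)] $\zeta_2(\sigma_1)=\begin{pmatrix} \frac{2bw+dx}{x} & b\\ \frac{b-bw^2}{x^2} & d\end{pmatrix}\oplus 1$, $\zeta_2(\rho_1)=\begin{pmatrix} w & x\\ \frac{1-w^2}{x} & -w\end{pmatrix}\oplus 1$, $\zeta_2(\gamma_1)=\zeta_2(\gamma_2)=I_3$, where $b,d,w,x\in\mathbb{C}$, $x\neq 0$, $dx+bw\neq \pm b$. \item[(3)] $\zeta_3(\sigma_1)=\begin{pmatrix} a & b\\ c & d\end{pmatrix}\oplus 1$, $\zeta_3(\rho_1)=\mathrm{diag}(-1,-1,1)$, $\zeta_3(\gamma_1)=\zeta_3(\gamma_2)=I_3$, $ad-bc\neq 0$. \item[(4)] $\zeta_4(\sigma_1)=\begin{pmatrix} a & b\\ c & d\end{pmatrix}\oplus 1$, $\zeta_4(\rho_1)=\zeta_4(\gamma_1)=\zeta_4(\gamma_2)=I_3$,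 $ad-bc\neq 0$. \item[(5)] $\zeta_5(\sigma_1)=\begin{pmatrix} a & 0\\ c & d\end{pmatrix}\oplus 1$, $\zeta_5(\rho_1)=\begin{pmatrix} -1 & 0\\ \frac{2c}{d-a} & 1\end{pmatrix}\oplus 1$, $\zeta_5(\gamma_1)=\zeta_5(\gamma_2)=I_3$, $ad\neq 0$, $a\neq d$. \item[(6)] $\zeta_6(\sigma_1)=\begin{pmatrix} a & 0\\ c & d\end{pmatrix}\oplus 1$, $\zeta_6(\rho_1)=\begin{pmatrix} 1 & 0\\ \frac{2c}{a-d} & -1\end{pmatrix}\oplus 1$, $\zeta_6(\gamma_1)=\zeta_6(\gamma_2)=I_3$, $ad\neq 0$, $a\neq d$. \item[(7)] $\zeta_7(\sigma_1)=\mathrm{diag}(d,d,1)$, $\zeta_7(\rho_1)=\begin{pmatrix} 1 & 0\\ y & -1\end{pmatrix}\oplus 1$, $\zeta_7(\gamma_1)=\zeta_7(\gamma_2)=I_3$, $d\neq 0$. \item[(8)] $\zeta_8(\sigma_1)=\mathrm{diag}(d,d,1)$, $\zeta_8(\rho_1)=\begin{pmatrix} -1 & 0\\ y & 1\end{pmatrix}\oplus 1$, $\zeta_8(\gamma_1)=\zeta_8(\gamma_2)=I_3$, $d\neq 0$. \end{itemize} (All parameters are complex numbers.)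
   Context: The twisted virtual braid group $\mathrm{TVB}_2$ is the group with generators $\sigma_1,\rho_1,\gamma_1,\gamma_2$ and defining relations $\rho_1^2=1$, $\gamma_1^2=\gamma_2^2=1$, $\gamma_1\gamma_2=\gamma_2\gamma_1$, $\rho_1\gamma_1=\gamma_2\rho_1$, $\rho_1\sigma_1\rho_1=\gamma_2\gamma_1\sigma_1\gamma_1\gamma_2$. For a $2\times 2$ matrix $M$, $M\oplus 1$ denotes the $3\times3$ block-diagonal matrix with blocks $M$ and $1$. A representation is faithful if it is injective. *)

theory Defs
  imports "HOL-Analysis.Analysis"
begin

text \<open>Generators of TVB_2. A letter is a generator with an exponent flag
  (True = the generator, False = its inverse).\<close>
datatype gen = Sig | Rho | Gam1 | Gam2

type_synonym letter = "gen \<times> bool"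
type_synonym word = "letter list"

definition g :: "gen \<Rightarrow> letter" where "g x = (x, True)"
definition gi :: "gen \<Rightarrow> letter" where "gi x = (x, False)"

text \<open>Defining relators (each relation u = v written as u v^{-1}).\<close>
definition tvb2_relators :: "word set" where
  "tvb2_relators =
    { [g Rho, g Rho],
      [g Gam1, g Gam1],
      [g Gam2, g Gam2],
      [g Gam1, g Gam2, gi Gam1, gi Gam2],
      [g Rho, g Gam1, gi Rho, gi Gam2],
      [g Rho, g Sig, g Rho, gi Gam2, gi Gam1, gi Sig, gi Gam1, gi Gam2] }"

inductive tvb2_eq :: "word \<Rightarrow> word \<Rightarrow> bool" where
  refl: "tvb2_eq w w"
| sym: "tvb2_eq u v \<Longrightarrow> tvb2_eq v u"
| trans: "tvb2_eq u v \<Longrightarrow> tvb2_eq v w \<Longrightarrow> tvb2_eq u w"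
| cancel: "tvb2_eq (u @ [(x, s), (x, \<not> s)] @ v) (u @ v)"
| relator: "r \<in> tvb2_relators \<Longrightarrow> tvb2_eq (u @ r @ v) (u @ v)"

type_synonym mat3 = "complex ^ 3 ^ 3"

definition eval_word :: "(gen \<Rightarrow> mat3) \<Rightarrow> word \<Rightarrow> mat3" where
  "eval_word f w = foldr (\<lambda>(x, s) acc. (if s then f x else matrix_inv (f x)) ** acc) w (mat 1)"

definition tvb2_rep :: "(gen \<Rightarrow> mat3) \<Rightarrow> bool" where
  "tvb2_rep f \<longleftrightarrow> (\<forall>x. invertible (f x)) \<and> (\<forall>r \<in> tvb2_relators. eval_word f r = mat 1)"

definition tvb2_faithful :: "(gen \<Rightarrow> mat3) \<Rightarrow> bool" where
  "tvb2_faithful f \<longleftrightarrow> (\<forall>w. eval_word f w = mat 1 \<longrightarrow> tvb2_eq w [])"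

definition blk :: "complex \<Rightarrow> complex \<Rightarrow> complex \<Rightarrow> complex \<Rightarrow> mat3" where
  "blk a b c d = vector [vector [a, b, 0], vector [c, d, 0], vector [0, 0, 1]]"

definition zeta1 :: "complex \<Rightarrow> complex \<Rightarrow> complex \<Rightarrow> gen \<Rightarrow> mat3" where
  "zeta1 b d x = (\<lambda>y. case y of
     Sig \<Rightarrow> blk d b (b / x^2) d
   | Rho \<Rightarrow> blk 0 x (1 / x) 0
   | Gam1 \<Rightarrow> blk (-1) 0 0 1
   | Gam2 \<Rightarrow> blk 1 0 0 (-1))"

definition zeta2 :: "complex \<Rightarrow> complex \<Rightarrow> complex \<Rightarrow> complex \<Rightarrow> gen \<Rightarrow> mat3" where
  "zeta2 b d w x = (\<lambda>y. case y of
     Sig \<Rightarrow> blk ((2*b*w + d*x) / x) b ((b - b*w^2) / x^2) d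
   | Rho \<Rightarrow> blk w x ((1 - w^2) / x) (-w)
   | Gam1 \<Rightarrow> mat 1
   | Gam2 \<Rightarrow> mat 1)"

definition zeta3 :: "complex \<Rightarrow> complex \<Rightarrow> complex \<Rightarrow> complex \<Rightarrow> gen \<Rightarrow> mat3" where
  "zeta3 a b c d = (\<lambda>y. case y of
     Sig \<Rightarrow> blk a b c d
   | Rho \<Rightarrow> blk (-1) 0 0 (-1)
   | Gam1 \<Rightarrow> mat 1
   | Gam2 \<Rightarrow> mat 1)"

definition zeta4 :: "complex \<Rightarrow> complex \<Rightarrow> complex \<Rightarrow> complex \<Rightarrow> gen \<Rightarrow> mat3" where
  "zeta4 a b c d = (\<lambda>y. case y of
     Sig \<Rightarrow> blk a b c d
   | Rho \<Rightarrow> mat 1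
   | Gam1 \<Rightarrow> mat 1
   | Gam2 \<Rightarrow> mat 1)"

definition zeta5 :: "complex \<Rightarrow> complex \<Rightarrow> complex \<Rightarrow> gen \<Rightarrow> mat3" where
  "zeta5 a c d = (\<lambda>y. case y of
     Sig \<Rightarrow> blk a 0 c d
   | Rho \<Rightarrow> blk (-1) 0 (2*c / (d - a)) 1
   | Gam1 \<Rightarrow> mat 1
   | Gam2 \<Rightarrow> mat 1)"

definition zeta6 :: "complex \<Rightarrow> complex \<Rightarrow> complex \<Rightarrow> gen \<Rightarrow> mat3" where
  "zeta6 a c d = (\<lambda>y. case y of
     Sig \<Rightarrow> blk a 0 c d
   | Rho \<Rightarrow> blk 1 0 (2*c / (a - d)) (-1)
   | Gam1 \<Rightarrow> mat 1
   | Gam2 \<Rightarrow> mat 1)"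

definition zeta7 :: "complex \<Rightarrow> complex \<Rightarrow> gen \<Rightarrow> mat3" where
  "zeta7 d y0 = (\<lambda>y. case y of
     Sig \<Rightarrow> blk d 0 0 d
   | Rho \<Rightarrow> blk 1 0 y0 (-1)
   | Gam1 \<Rightarrow> mat 1
   | Gam2 \<Rightarrow> mat 1)"

definition zeta8 :: "complex \<Rightarrow> complex \<Rightarrow> gen \<Rightarrow> mat3" where
  "zeta8 d y0 = (\<lambda>y. case y of
     Sig \<Rightarrow> blk d 0 0 d
   | Rho \<Rightarrow> blk (-1) 0 y0 1
   | Gam1 \<Rightarrow> mat 1
   | Gam2 \<Rightarrow> mat 1)"

end

theory Submission
  imports Defs
begin


lemma blk_mult: "blk a b c d ** blk a' b' c' d' = blk (a*a'+b*c') (a*b'+b*d') (c*a'+d*c') (c*b'+d*d')"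
  unfolding blk_def matrix_matrix_mult_def
  by (simp add: vec_eq_iff forall_3 sum_3)

lemma mat1_blk: "(mat 1 :: mat3) = blk 1 0 0 1"
  unfolding blk_def by (simp add: vec_eq_iff forall_3 mat_def)

lemma blk_eq: "blk a b c d = blk a' b' c' d' \<longleftrightarrow> a=a' \<and> b=b' \<and> c=c' \<and> d=d'"
  unfolding blk_def by (simp add: vec_eq_iff forall_3)

lemma blk_inv0: "a*d - b*c = D \<Longrightarrow> D \<noteq> 0 \<Longrightarrow> invertible (blk a b c d)"
  unfolding invertible_def
  apply (rule exI[of _ "blk (d/D) (-b/D) (-c/D) (a/D)"])
  apply (simp add: blk_mult mat1_blk blk_eq field_simps)
  done

lemma blk_inv: "a*d - b*c \<noteq> 0 \<Longrightarrow> invertible (blk a b c d)"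
  using blk_inv0 by blast

lemma minv: "invertible (A::mat3) \<Longrightarrow> A ** matrix_inv A = mat 1 \<and> matrix_inv A ** A = mat 1"
  unfolding invertible_def matrix_inv_def by (rule someI_ex)

lemma minv_unique: "(A::mat3) ** B = mat 1 \<Longrightarrow> B ** A = mat 1 \<Longrightarrow> matrix_inv A = B"
proof -
  assume h: "A ** B = mat 1" "B ** A = mat 1"
  then have "invertible A" unfolding invertible_def by blast
  then have "matrix_inv A ** A = mat 1" using minv by blast
  moreover have "(matrix_inv A ** A) ** B = matrix_inv A ** (A ** B)" by (rule matrix_mul_assoc[symmetric])
  ultimately show ?thesis using h by (metis matrix_mul_lid matrix_mul_rid)
qed

lemma rep_intro:
  fixes f :: "gen \<Rightarrow> mat3"
  assumes inv: "\<And>x. invertible (f x)"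
  and r1: "f Rho ** f Rho = mat 1" and g1: "f Gam1 ** f Gam1 = mat 1" and g2: "f Gam2 ** f Gam2 = mat 1"
  and c: "f Gam1 ** f Gam2 = f Gam2 ** f Gam1"
  and rg: "f Rho ** f Gam1 = f Gam2 ** f Rho"
  and rs: "f Rho ** f Sig ** f Rho = f Gam2 ** f Gam1 ** f Sig ** f Gam1 ** f Gam2"
  shows "tvb2_rep f"
proof -
  have iR: "matrix_inv (f Rho) = f Rho" by (rule minv_unique[OF r1 r1])
  have i1: "matrix_inv (f Gam1) = f Gam1" by (rule minv_unique[OF g1 g1])
  have i2: "matrix_inv (f Gam2) = f Gam2" by (rule minv_unique[OF g2 g2])
  have iS: "f Sig ** matrix_inv (f Sig) = mat 1" using minv[OF inv] by blast
  have A: "A ** (B ** C) = A ** B ** C" for A B C :: mat3 by (rule matrix_mul_assoc)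
  have e4: "f Gam1 ** f Gam2 ** f Gam1 ** f Gam2 = mat 1"
    by (metis A c g1 g2 matrix_mul_lid)
  have e5: "f Rho ** f Gam1 ** f Rho ** f Gam2 = mat 1"
    by (metis A rg r1 g2 matrix_mul_lid)
  have e6: "f Rho ** f Sig ** f Rho ** f Gam2 ** f Gam1 ** matrix_inv (f Sig) ** f Gam1 ** f Gam2 = mat 1"
  proof -
    have "f Rho ** f Sig ** f Rho ** f Gam2 ** f Gam1 ** matrix_inv (f Sig) ** f Gam1 ** f Gam2
      = f Gam2 ** f Gam1 ** f Sig ** (f Gam1 ** (f Gam2 ** f Gam2) ** f Gam1) ** matrix_inv (f Sig) ** f Gam1 ** f Gam2"
      by (simp add: rs A)
    also have "\<dots> = f Gam2 ** (f Gam1 ** (f Sig ** matrix_inv (f Sig)) ** f Gam1) ** f Gam2"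
      by (simp add: g1 g2 A)
    also have "\<dots> = mat 1" by (simp add: iS g1 g2 A)
    finally show ?thesis .
  qed
  show ?thesis unfolding tvb2_rep_def
    using inv r1 g1 g2 e4 e5 e6
    by (simp add: tvb2_relators_def eval_word_def g_def gi_def iR i1 i2 A)
qed

definition sw :: "nat \<Rightarrow> nat \<Rightarrow> nat \<Rightarrow> nat" where
  "sw i j = (\<lambda>k. if k = i then j else if k = j then i else k)"

fun pg :: "gen \<Rightarrow> nat \<Rightarrow> nat" where
  "pg Gam1 = sw 1 2"
| "pg Gam2 = sw 3 4"
| "pg Rho = sw 1 3 \<circ> sw 2 4"
| "pg Sig = sw 1 4"

definition phi :: "word \<Rightarrow> nat \<Rightarrow> nat" where
  "phi w = foldr (\<lambda>l acc. pg (fst l) \<circ> acc) w id"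

lemma phi_append: "phi (u @ v) = phi u \<circ> phi v"
  unfolding phi_def by (induction u) auto

lemma pg_inv: "pg x \<circ> pg x = id"
  by (cases x) (auto simp: fun_eq_iff sw_def)

lemma phi_rel: "r \<in> tvb2_relators \<Longrightarrow> phi r = id"
  by (auto simp: tvb2_relators_def phi_def g_def gi_def fun_eq_iff sw_def)

lemma phi_eq: "tvb2_eq u v \<Longrightarrow> phi u = phi v"
proof (induction rule: tvb2_eq.induct)
  case (cancel u x s v)
  have "phi [(x, s), (x, \<not> s)] = id" using pg_inv by (simp add: phi_def)
  have "phi (u @ [(x, s), (x, \<not> s)] @ v) = phi u \<circ> phi [(x, s), (x, \<not> s)] \<circ> phi v"
    by (simp only: phi_append o_assoc)
  then show ?case using \<open>phi [(x, s), (x, \<not> s)] = id\<close> by (simp add: phi_append)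
next
  case (relator r u v)
  then show ?case by (simp add: phi_append phi_rel)
qed auto

lemma not_triv: "phi w \<noteq> id \<Longrightarrow> \<not> tvb2_eq w []"
  using phi_eq by (force simp: phi_def)

lemma gam1_unf: "f Gam1 = mat 1 \<Longrightarrow> \<not> tvb2_faithful f"
proof
  assume h: "f Gam1 = mat 1" "tvb2_faithful f"
  have "eval_word f [g Gam1] = mat 1" using h(1) by (simp add: eval_word_def g_def)
  then have "tvb2_eq [g Gam1] []" using h(2) unfolding tvb2_faithful_def by blast
  moreover have "phi [g Gam1] \<noteq> id"
  proof
    assume "phi [g Gam1] = id"
    then have "phi [g Gam1] 1 = 1" by simp
    then show False by (simp add: phi_def g_def sw_def)
  qed
  ultimately show False using not_triv by blast
qed


lemma comm_unf:
  assumes "invertible (f Sig)" "f Rho ** f Sig ** f Rho = f Sig"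
  shows "\<not> tvb2_faithful f"
proof
  assume h: "tvb2_faithful f"
  let ?w = "[g Rho, g Sig, g Rho, gi Sig]"
  have "eval_word f ?w = f Rho ** f Sig ** f Rho ** matrix_inv (f Sig)"
    by (simp add: eval_word_def g_def gi_def matrix_mul_assoc)
  also have "\<dots> = mat 1" using assms minv by simp
  finally have "tvb2_eq ?w []" using h unfolding tvb2_faithful_def by blast
  moreover have "phi ?w \<noteq> id"
  proof
    assume "phi ?w = id"
    then have "phi ?w 1 = 1" by simp
    then show False by (simp add: phi_def g_def gi_def sw_def)
  qed
  ultimately show False using not_triv by blast
qed

lemma inv_case: "(\<And>y. invertible (f y)) \<Longrightarrow> invertible (f Sig) \<and> invertible (f Rho)" by blast

lemma z1: assumes "x \<noteq> 0" "b^2 - d^2 * x^2 \<noteq> 0"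
  shows "tvb2_rep (zeta1 b d x) \<and> \<not> tvb2_faithful (zeta1 b d x)"
proof -
  have D: "d * d - b * (b / x^2) \<noteq> 0" using assms by (auto simp: field_simps power2_eq_square)
  have inv: "invertible (zeta1 b d x y)" for y
    using D assms by (cases y) (auto simp: zeta1_def intro!: blk_inv)
  have c: "zeta1 b d x Rho ** zeta1 b d x Sig ** zeta1 b d x Rho = zeta1 b d x Sig"
    using assms by (simp add: zeta1_def blk_mult blk_eq field_simps power2_eq_square)
  have "tvb2_rep (zeta1 b d x)"
    apply (rule rep_intro[OF inv])
    using assms by (simp_all add: zeta1_def blk_mult blk_eq mat1_blk field_simps power2_eq_square)
  then show ?thesis using comm_unf[OF inv c] by blast
qed

lemma z2: assumes "x \<noteq> 0" "d*x + b*w \<noteq> b" "d*x + b*w \<noteq> - b"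
  shows "tvb2_rep (zeta2 b d w x) \<and> \<not> tvb2_faithful (zeta2 b d w x)"
proof -
  have D: "(2*b*w + d*x) / x * d - b * ((b - b*w^2) / x^2) \<noteq> 0"
  proof -
    have "(2*b*w + d*x) / x * d - b * ((b - b*w^2) / x^2) = (d*x + b*w - b) * (d*x+b*w+b) / x^2"
      using assms by (simp add: field_simps power2_eq_square)
    moreover have "d*x+b*w - b \<noteq> 0" "d*x+b*w+b \<noteq> 0" using assms(2,3) by (auto simp: eq_neg_iff_add_eq_0)
    ultimately show ?thesis using assms by simp
  qed
  have D2: "w * (-w) - x * ((1 - w^2) / x) \<noteq> 0" using assms by (simp add: field_simps power2_eq_square)
  have inv: "invertible (zeta2 b d w x y)" for y
    using D D2 by (cases y) (auto simp: zeta2_def mat1_blk intro!: blk_inv)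
  have "tvb2_rep (zeta2 b d w x)"
    apply (rule rep_intro[OF inv])
    using assms by (simp_all add: zeta2_def blk_mult blk_eq mat1_blk field_simps power2_eq_square)
  then show ?thesis using gam1_unf[of "zeta2 b d w x"] by (simp add: zeta2_def)
qed

lemma z3: assumes "a*d - b*c \<noteq> 0"
  shows "tvb2_rep (zeta3 a b c d) \<and> \<not> tvb2_faithful (zeta3 a b c d)"
proof -
  have inv: "invertible (zeta3 a b c d y)" for y
    using assms by (cases y) (auto simp: zeta3_def mat1_blk intro!: blk_inv)
  have "tvb2_rep (zeta3 a b c d)"
    apply (rule rep_intro[OF inv])
    using assms by (simp_all add: zeta3_def blk_mult blk_eq mat1_blk)
  then show ?thesis using gam1_unf[of "zeta3 a b c d"] by (simp add: zeta3_def)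
qed

lemma z4: assumes "a*d - b*c \<noteq> 0"
  shows "tvb2_rep (zeta4 a b c d) \<and> \<not> tvb2_faithful (zeta4 a b c d)"
proof -
  have inv: "invertible (zeta4 a b c d y)" for y
    using assms by (cases y) (auto simp: zeta4_def mat1_blk intro!: blk_inv)
  have "tvb2_rep (zeta4 a b c d)"
    apply (rule rep_intro[OF inv])
    using assms by (simp_all add: zeta4_def blk_mult blk_eq mat1_blk)
  then show ?thesis using gam1_unf[of "zeta4 a b c d"] by (simp add: zeta4_def)
qed

lemma z5: assumes "a*d \<noteq> 0" "a \<noteq> d"
  shows "tvb2_rep (zeta5 a c d) \<and> \<not> tvb2_faithful (zeta5 a c d)"
proof -
  have inv: "invertible (zeta5 a c d y)" for y
    using assms by (cases y) (auto simp: zeta5_def mat1_blk intro!: blk_inv)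
  have "d - a \<noteq> 0" using assms by simp
  have sq: "a * a + d * d - a * (d * 2) \<noteq> 0"
  proof -
    have "a * a + d * d - a * (d * 2) = (a - d) * (a - d)" by (simp add: algebra_simps)
    then show ?thesis using assms by simp
  qed
  have "tvb2_rep (zeta5 a c d)"
    apply (rule rep_intro[OF inv])
    using assms \<open>d - a \<noteq> 0\<close> sq by (simp_all add: zeta5_def blk_mult blk_eq mat1_blk field_simps)
  then show ?thesis using gam1_unf[of "zeta5 a c d"] by (simp add: zeta5_def)
qed

lemma z6: assumes "a*d \<noteq> 0" "a \<noteq> d"
  shows "tvb2_rep (zeta6 a c d) \<and> \<not> tvb2_faithful (zeta6 a c d)"
proof -
  have inv: "invertible (zeta6 a c d y)" for y
    using assms by (cases y) (auto simp: zeta6_def mat1_blk intro!: blk_inv)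
  have "a - d \<noteq> 0" using assms by simp
  have sq: "a * a + d * d - a * (d * 2) \<noteq> 0"
  proof -
    have "a * a + d * d - a * (d * 2) = (a - d) * (a - d)" by (simp add: algebra_simps)
    then show ?thesis using assms by simp
  qed
  have "tvb2_rep (zeta6 a c d)"
    apply (rule rep_intro[OF inv])
    using assms \<open>a - d \<noteq> 0\<close> sq by (simp_all add: zeta6_def blk_mult blk_eq mat1_blk field_simps)
  then show ?thesis using gam1_unf[of "zeta6 a c d"] by (simp add: zeta6_def)
qed

lemma z7: assumes "d \<noteq> 0"
  shows "tvb2_rep (zeta7 d y) \<and> \<not> tvb2_faithful (zeta7 d y)"
proof -
  have inv: "invertible (zeta7 d y z)" for z
    using assms by (cases z) (auto simp: zeta7_def mat1_blk intro!: blk_inv)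
  have "tvb2_rep (zeta7 d y)"
    apply (rule rep_intro[OF inv])
    using assms by (simp_all add: zeta7_def blk_mult blk_eq mat1_blk)
  then show ?thesis using gam1_unf[of "zeta7 d y"] by (simp add: zeta7_def)
qed

lemma z8: assumes "d \<noteq> 0"
  shows "tvb2_rep (zeta8 d y) \<and> \<not> tvb2_faithful (zeta8 d y)"
proof -
  have inv: "invertible (zeta8 d y z)" for z
    using assms by (cases z) (auto simp: zeta8_def mat1_blk intro!: blk_inv)
  have "tvb2_rep (zeta8 d y)"
    apply (rule rep_intro[OF inv])
    using assms by (simp_all add: zeta8_def blk_mult blk_eq mat1_blk)
  then show ?thesis using gam1_unf[of "zeta8 d y"] by (simp add: zeta8_def)
qed


theorem theorem3p2:
  shows
  "(\<forall>b d x. x \<noteq> 0 \<and> b^2 - d^2 * x^2 \<noteq> 0 \<longrightarrow>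
       tvb2_rep (zeta1 b d x) \<and> \<not> tvb2_faithful (zeta1 b d x))
 \<and> (\<forall>b d w x. x \<noteq> 0 \<and> d*x + b*w \<noteq> b \<and> d*x + b*w \<noteq> - b \<longrightarrow>
       tvb2_rep (zeta2 b d w x) \<and> \<not> tvb2_faithful (zeta2 b d w x))
 \<and> (\<forall>a b c d. a*d - b*c \<noteq> 0 \<longrightarrow>
       tvb2_rep (zeta3 a b c d) \<and> \<not> tvb2_faithful (zeta3 a b c d))
 \<and> (\<forall>a b c d. a*d - b*c \<noteq> 0 \<longrightarrow>
       tvb2_rep (zeta4 a b c d) \<and> \<not> tvb2_faithful (zeta4 a b c d))
 \<and> (\<forall>a c d. a*d \<noteq> 0 \<and> a \<noteq> d \<longrightarrow>
       tvb2_rep (zeta5 a c d) \<and> \<not> tvb2_faithful (zeta5 a c d))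
 \<and> (\<forall>a c d. a*d \<noteq> 0 \<and> a \<noteq> d \<longrightarrow>
       tvb2_rep (zeta6 a c d) \<and> \<not> tvb2_faithful (zeta6 a c d))
 \<and> (\<forall>d y. d \<noteq> 0 \<longrightarrow>
       tvb2_rep (zeta7 d y) \<and> \<not> tvb2_faithful (zeta7 d y))
 \<and> (\<forall>d y. d \<noteq> 0 \<longrightarrow>
       tvb2_rep (zeta8 d y) \<and> \<not> tvb2_faithful (zeta8 d y))"
    apply (intro conjI allI impI)
  using z1 z2 z3 z4 z5 z6 z7 z8 by auto

end
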